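(* Let $f\colon X\to Y$ be a morphism in a pre-Hilbert $*$-category. The following are equivalent: (i) $f$ is contractive; (ii) $f$ has a jointly epic codilation; (iii) $f$ has a codilation; (iv) $\begin{bmatrix}1 & f^*\\ f & 1\end{bmatrix}\geq 0$ as an endomorphism of $X\oplus Y$.
   Context: A $*$-category is a category with a choice of $f^*\colon Y\to X$ for each $f\colon X\to Y$ such that $1^*=1$, $(gf)^*=f^*g^*$, $(f^* )^*=f$; $f$ is an isometry if $f^*f=1$. A pre-Hilbert $*$-category is a $*$-category with (R1) a zero object, (R2) orthonormal biproducts of all pairs of objects (biproducts $(X,s_1,r_1,s_2,r_2)$ with $r_k=s_k^*$; matrices of morphisms between biproducts are taken with respect to these), (R3) an isometric kernel for every morphism, and (R4) every diagonal $\Delta\colon X\to X\oplus X$ a kernel of some morphism; such a category is additive. For a Hermitian endomorphism $a$ of $A$, $a\geq 0$ means $a=y^*y$ for some $y\colon A\to Y$, and $a\le b$ means $b-a\ge 0$. A morphism $f$ is contractive if $f^*f\leq 1$. A codilation of $f\colon X\to Y$ is a cospan $(T,t_1,t_2)$ with $t_1\colon X\to T$, $t_2\colon Y\to T$ isometries and $t_2^*t_1=f$; it is jointly epic if $ut_1=vt_1$ and $ut_2=vt_2$ imply $u=v$. *)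

theory Defs
  imports Main
begin

text \<open>A category is represented by a type of objects and a type of morphisms,
with domain, codomain, composition (Cmp C g f = g after f, meaningful when
Dom g = Cod f), identities and the involution (star).\<close>

record ('o, 'm) scat =
  Dom :: "'m \<Rightarrow> 'o"
  Cod :: "'m \<Rightarrow> 'o"
  Cmp :: "'m \<Rightarrow> 'm \<Rightarrow> 'm"
  Idt :: "'o \<Rightarrow> 'm"
  Str :: "'m \<Rightarrow> 'm"

definition hom :: "('o, 'm) scat \<Rightarrow> 'm \<Rightarrow> 'o \<Rightarrow> 'o \<Rightarrow> bool" where
  "hom C f X Y \<longleftrightarrow> Dom C f = X \<and> Cod C f = Y"

definition star_category :: "('o, 'm) scat \<Rightarrow> bool" where
  "star_category C \<longleftrightarrow>
     (\<forall>X. Dom C (Idt C X) = X \<and> Cod C (Idt C X) = X) \<and>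
     (\<forall>f g. Dom C g = Cod C f \<longrightarrow>
        Dom C (Cmp C g f) = Dom C f \<and> Cod C (Cmp C g f) = Cod C g) \<and>
     (\<forall>f g h. Dom C g = Cod C f \<and> Dom C h = Cod C g \<longrightarrow>
        Cmp C h (Cmp C g f) = Cmp C (Cmp C h g) f) \<and>
     (\<forall>f. Cmp C f (Idt C (Dom C f)) = f \<and> Cmp C (Idt C (Cod C f)) f = f) \<and>
     (\<forall>f. Dom C (Str C f) = Cod C f \<and> Cod C (Str C f) = Dom C f) \<and>
     (\<forall>X. Str C (Idt C X) = Idt C X) \<and>
     (\<forall>f g. Dom C g = Cod C f \<longrightarrow> Str C (Cmp C g f) = Cmp C (Str C f) (Str C g)) \<and>
     (\<forall>f. Str C (Str C f) = f)"

definition isometry :: "('o, 'm) scat \<Rightarrow> 'm \<Rightarrow> bool" where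
  "isometry C f \<longleftrightarrow> Cmp C (Str C f) f = Idt C (Dom C f)"

definition zero_obj :: "('o, 'm) scat \<Rightarrow> 'o \<Rightarrow> bool" where
  "zero_obj C Z \<longleftrightarrow> (\<forall>X. (\<exists>!f. hom C f Z X) \<and> (\<exists>!f. hom C f X Z))"

definition is_zero :: "('o, 'm) scat \<Rightarrow> 'm \<Rightarrow> bool" where
  "is_zero C f \<longleftrightarrow> (\<exists>Z a b. zero_obj C Z \<and> hom C a (Dom C f) Z \<and> hom C b Z (Cod C f)
                         \<and> f = Cmp C b a)"

definition biproduct :: "('o, 'm) scat \<Rightarrow> 'o \<Rightarrow> 'o \<Rightarrow> 'o \<Rightarrow> 'm \<Rightarrow> 'm \<Rightarrow> 'm \<Rightarrow> 'm \<Rightarrow> bool" where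
  "biproduct C X1 X2 B s1 r1 s2 r2 \<longleftrightarrow>
     hom C s1 X1 B \<and> hom C r1 B X1 \<and> hom C s2 X2 B \<and> hom C r2 B X2 \<and>
     Cmp C r1 s1 = Idt C X1 \<and> Cmp C r2 s2 = Idt C X2 \<and>
     is_zero C (Cmp C r2 s1) \<and> is_zero C (Cmp C r1 s2) \<and>
     (\<forall>T g1 g2. hom C g1 T X1 \<and> hom C g2 T X2 \<longrightarrow>
        (\<exists>!h. hom C h T B \<and> Cmp C r1 h = g1 \<and> Cmp C r2 h = g2)) \<and>
     (\<forall>T g1 g2. hom C g1 X1 T \<and> hom C g2 X2 T \<longrightarrow>
        (\<exists>!h. hom C h B T \<and> Cmp C h s1 = g1 \<and> Cmp C h s2 = g2))"

definition ortho_biproduct :: "('o, 'm) scat \<Rightarrow> 'o \<Rightarrow> 'o \<Rightarrow> 'o \<Rightarrow> 'm \<Rightarrow> 'm \<Rightarrow> 'm \<Rightarrow> 'm \<Rightarrow> bool" where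
  "ortho_biproduct C X1 X2 B s1 r1 s2 r2 \<longleftrightarrow>
     biproduct C X1 X2 B s1 r1 s2 r2 \<and> r1 = Str C s1 \<and> r2 = Str C s2"

definition kernel :: "('o, 'm) scat \<Rightarrow> 'm \<Rightarrow> 'm \<Rightarrow> bool" where
  "kernel C f k \<longleftrightarrow> Cod C k = Dom C f \<and> is_zero C (Cmp C f k) \<and>
     (\<forall>g. Cod C g = Dom C f \<and> is_zero C (Cmp C f g) \<longrightarrow>
        (\<exists>!h. hom C h (Dom C g) (Dom C k) \<and> Cmp C k h = g))"

definition pre_hilbert :: "('o, 'm) scat \<Rightarrow> bool" where
  "pre_hilbert C \<longleftrightarrow> star_category C \<and>
     (\<exists>Z. zero_obj C Z) \<and>
     (\<forall>X Y. \<exists>B s1 r1 s2 r2. ortho_biproduct C X Y B s1 r1 s2 r2) \<and>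
     (\<forall>f. \<exists>k. kernel C f k \<and> isometry C k) \<and>
     (\<forall>X B s1 r1 s2 r2 d. ortho_biproduct C X X B s1 r1 s2 r2 \<and> hom C d X B \<and>
        Cmp C r1 d = Idt C X \<and> Cmp C r2 d = Idt C X \<longrightarrow>
        (\<exists>g. Dom C g = B \<and> kernel C g d))"

text \<open>The (canonical, biproduct-induced) sum of parallel morphisms:
  h = f + g iff h = codiagonal \<circ> pairing(f,g) for some biproduct of Y with Y.\<close>
definition is_sum :: "('o, 'm) scat \<Rightarrow> 'm \<Rightarrow> 'm \<Rightarrow> 'm \<Rightarrow> bool" where
  "is_sum C f g h \<longleftrightarrow> Dom C g = Dom C f \<and> Cod C g = Cod C f \<and>
     (\<exists>B s1 r1 s2 r2 p q. biproduct C (Cod C f) (Cod C f) B s1 r1 s2 r2 \<and>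
        hom C p (Dom C f) B \<and> Cmp C r1 p = f \<and> Cmp C r2 p = g \<and>
        hom C q B (Cod C f) \<and> Cmp C q s1 = Idt C (Cod C f) \<and> Cmp C q s2 = Idt C (Cod C f) \<and>
        h = Cmp C q p)"

definition positive :: "('o, 'm) scat \<Rightarrow> 'm \<Rightarrow> bool" where
  "positive C a \<longleftrightarrow> (\<exists>y. Dom C y = Dom C a \<and> a = Cmp C (Str C y) y)"

text \<open>a \<le> b iff b - a \<ge> 0, i.e. b = a + c for some c \<ge> 0.\<close>
definition leq :: "('o, 'm) scat \<Rightarrow> 'm \<Rightarrow> 'm \<Rightarrow> bool" where
  "leq C a b \<longleftrightarrow> Dom C b = Dom C a \<and> Cod C b = Cod C a \<and>
     (\<exists>c. hom C c (Dom C a) (Cod C a) \<and> positive C c \<and> is_sum C a c b)"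

definition contractive :: "('o, 'm) scat \<Rightarrow> 'm \<Rightarrow> bool" where
  "contractive C f \<longleftrightarrow> leq C (Cmp C (Str C f) f) (Idt C (Dom C f))"

definition codilation :: "('o, 'm) scat \<Rightarrow> 'm \<Rightarrow> 'o \<Rightarrow> 'm \<Rightarrow> 'm \<Rightarrow> bool" where
  "codilation C f T t1 t2 \<longleftrightarrow> hom C t1 (Dom C f) T \<and> hom C t2 (Cod C f) T \<and>
     isometry C t1 \<and> isometry C t2 \<and> Cmp C (Str C t2) t1 = f"

definition jointly_epic :: "('o, 'm) scat \<Rightarrow> 'o \<Rightarrow> 'm \<Rightarrow> 'm \<Rightarrow> bool" where
  "jointly_epic C T t1 t2 \<longleftrightarrow>
     (\<forall>u v. Dom C u = T \<and> Dom C v = T \<and> Cod C u = Cod C v \<and>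
        Cmp C u t1 = Cmp C v t1 \<and> Cmp C u t2 = Cmp C v t2 \<longrightarrow> u = v)"

text \<open>Condition (iv): the matrix [[1, f*],[f, 1]] w.r.t. an orthonormal biproduct
  X \<oplus> Y (entry (i,j) = r_i m s_j) is positive.\<close>
definition block_matrix_positive :: "('o, 'm) scat \<Rightarrow> 'm \<Rightarrow> bool" where
  "block_matrix_positive C f \<longleftrightarrow>
     (\<forall>B s1 r1 s2 r2 m. ortho_biproduct C (Dom C f) (Cod C f) B s1 r1 s2 r2 \<and> hom C m B B \<and>
        Cmp C r1 (Cmp C m s1) = Idt C (Dom C f) \<and> Cmp C r1 (Cmp C m s2) = Str C f \<and>
        Cmp C r2 (Cmp C m s1) = f \<and> Cmp C r2 (Cmp C m s2) = Idt C (Cod C f) \<longrightarrow>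
        positive C m)"

end

theory Submission
  imports Defs
begin

locale ph =
  fixes C :: "('o, 'm) scat"
  assumes ph: "pre_hilbert C"
begin

abbreviation dm where "dm f \<equiv> Dom C f"
abbreviation cd where "cd f \<equiv> Cod C f"
abbreviation cmp (infixr "\<cdot>" 70) where "g \<cdot> f \<equiv> Cmp C g f"
abbreviation st where "st f \<equiv> Str C f"
abbreviation idt where "idt X \<equiv> Idt C X"

lemma sc: "star_category C" using ph unfolding pre_hilbert_def by auto

lemma id_dom[simp]: "dm (idt X) = X" and id_cod[simp]: "cd (idt X) = X"
  using sc unfolding star_category_def by auto
lemma comp_dom[simp]: "dm g = cd f \<Longrightarrow> dm (g \<cdot> f) = dm f"
  using sc unfolding star_category_def by auto
lemma comp_cod[simp]: "dm g = cd f \<Longrightarrow> cd (g \<cdot> f) = cd g"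
  using sc unfolding star_category_def by auto
lemma assoc: "dm g = cd f \<Longrightarrow> dm h = cd g \<Longrightarrow> (h \<cdot> g) \<cdot> f = h \<cdot> (g \<cdot> f)"
  using sc unfolding star_category_def by metis
lemma comp_id_r[simp]: "X = dm f \<Longrightarrow> f \<cdot> idt X = f"
  using sc unfolding star_category_def by auto
lemma comp_id_l[simp]: "Y = cd f \<Longrightarrow> idt Y \<cdot> f = f"
  using sc unfolding star_category_def by auto
lemma st_dom[simp]: "dm (st f) = cd f" and st_cod[simp]: "cd (st f) = dm f"
  using sc unfolding star_category_def by auto
lemma st_id[simp]: "st (idt X) = idt X"
  using sc unfolding star_category_def by auto
lemma st_comp: "dm g = cd f \<Longrightarrow> st (g \<cdot> f) = st f \<cdot> st g"
  using sc unfolding star_category_def by auto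
lemma st_st[simp]: "st (st f) = f"
  using sc unfolding star_category_def by auto

lemma st_inj: "st f = st g \<Longrightarrow> f = g" by (metis st_st)

section \<open>Zero\<close>

definition Z0 where "Z0 = (SOME Z. zero_obj C Z)"
lemma Z0: "zero_obj C Z0"
  using ph unfolding pre_hilbert_def Z0_def by (metis someI_ex)

definition zin where "zin X = (THE a. hom C a X Z0)"
definition zout where "zout Y = (THE b. hom C b Z0 Y)"
definition z where "z X Y = zout Y \<cdot> zin X"

lemma zin: "dm (zin X) = X" "cd (zin X) = Z0"
  and zin_u: "dm a = X \<Longrightarrow> cd a = Z0 \<Longrightarrow> a = zin X"
proof -
  have "\<exists>!a. hom C a X Z0" using Z0 unfolding zero_obj_def by auto
  then have "hom C (zin X) X Z0" unfolding zin_def by (rule theI')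
  then show "dm (zin X) = X" "cd (zin X) = Z0" unfolding hom_def by auto
  show "dm a = X \<Longrightarrow> cd a = Z0 \<Longrightarrow> a = zin X"
    using \<open>\<exists>!a. hom C a X Z0\<close> \<open>hom C (zin X) X Z0\<close> unfolding hom_def by auto
qed

lemma zout: "dm (zout Y) = Z0" "cd (zout Y) = Y"
  and zout_u: "dm a = Z0 \<Longrightarrow> cd a = Y \<Longrightarrow> a = zout Y"
proof -
  have "\<exists>!a. hom C a Z0 Y" using Z0 unfolding zero_obj_def by auto
  then have "hom C (zout Y) Z0 Y" unfolding zout_def by (rule theI')
  then show "dm (zout Y) = Z0" "cd (zout Y) = Y" unfolding hom_def by auto
  show "dm a = Z0 \<Longrightarrow> cd a = Y \<Longrightarrow> a = zout Y"
    using \<open>\<exists>!a. hom C a Z0 Y\<close> \<open>hom C (zout Y) Z0 Y\<close> unfolding hom_def by auto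
qed

lemma z_dom[simp]: "dm (z X Y) = X" and z_cod[simp]: "cd (z X Y) = Y"
  unfolding z_def using zin zout by auto

lemma is_zero_iff: "is_zero C f \<longleftrightarrow> f = z (dm f) (cd f)"
proof
  assume "is_zero C f"
  then obtain Z a b where Z: "zero_obj C Z" and a: "hom C a (dm f) Z" and b: "hom C b Z (cd f)"
    and f: "f = b \<cdot> a" unfolding is_zero_def by blast
  obtain \<phi> where phi: "hom C \<phi> Z0 Z" using Z unfolding zero_obj_def by blast
  obtain \<psi> where psi: "hom C \<psi> Z Z0" using Z unfolding zero_obj_def by blast
  have ea: "a = \<phi> \<cdot> zin (dm f)"
    using Z a phi zin unfolding zero_obj_def hom_def by (metis comp_cod comp_dom)
  have eb: "b = zout (cd f) \<cdot> \<psi>"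
    using Z b psi zout unfolding zero_obj_def hom_def by (metis comp_cod comp_dom)
  have "\<psi> \<cdot> \<phi> = idt Z0"
    using Z0 phi psi unfolding zero_obj_def hom_def by (metis comp_cod comp_dom id_cod id_dom)
  have "f = (zout (cd f) \<cdot> \<psi>) \<cdot> (\<phi> \<cdot> zin (dm f))"
    using f ea eb by metis
  also have "\<dots> = zout (cd f) \<cdot> ((\<psi> \<cdot> \<phi>) \<cdot> zin (dm f))"
    using phi psi zin zout unfolding hom_def by (simp add: assoc)
  finally show "f = z (dm f) (cd f)" using \<open>\<psi> \<cdot> \<phi> = idt Z0\<close> zin unfolding z_def by simp
next
  assume "f = z (dm f) (cd f)"
  then show "is_zero C f" unfolding is_zero_def z_def using Z0 zin zout unfolding hom_def by metis
qed

lemma z_comp[simp]: "cd f = X \<Longrightarrow> z X Y \<cdot> f = z (dm f) Y"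
proof -
  assume a: "cd f = X"
  have "zin X \<cdot> f = zin (dm f)" using a zin by (intro zin_u) auto
  then show ?thesis unfolding z_def using a zin zout by (simp add: assoc)
qed

lemma comp_z[simp]: "dm g = Y \<Longrightarrow> g \<cdot> z X Y = z X (cd g)"
proof -
  assume a: "dm g = Y"
  have "g \<cdot> zout Y = zout (cd g)" using a zout by (intro zout_u) auto
  then show ?thesis unfolding z_def using a zin zout by (simp add: assoc[symmetric])
qed

lemma st_z[simp]: "st (z X Y) = z Y X"
proof -
  have "st (zin X) = zout X" using zin by (intro zout_u) auto
  moreover have "st (zout Y) = zin Y" using zout by (intro zin_u) auto
  ultimately show ?thesis unfolding z_def using zin zout by (simp add: st_comp)
qed


section \<open>Biproducts\<close>

lemma bp: assumes "biproduct C X1 X2 B s1 r1 s2 r2"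
  shows "dm s1 = X1" "cd s1 = B" "dm r1 = B" "cd r1 = X1" "dm s2 = X2" "cd s2 = B" "dm r2 = B" "cd r2 = X2"
    "r1 \<cdot> s1 = idt X1" "r2 \<cdot> s2 = idt X2" "r2 \<cdot> s1 = z X1 X2" "r1 \<cdot> s2 = z X2 X1"
proof -
  show "dm s1 = X1" "cd s1 = B" "dm r1 = B" "cd r1 = X1" "dm s2 = X2" "cd s2 = B" "dm r2 = B" "cd r2 = X2"
    "r1 \<cdot> s1 = idt X1" "r2 \<cdot> s2 = idt X2"
    using assms unfolding biproduct_def hom_def by auto
  then show "r2 \<cdot> s1 = z X1 X2" "r1 \<cdot> s2 = z X2 X1"
    using assms unfolding biproduct_def is_zero_iff by auto
qed

lemma bp_swap: "biproduct C X1 X2 B s1 r1 s2 r2 \<Longrightarrow> biproduct C X2 X1 B s2 r2 s1 r1"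
  unfolding biproduct_def by blast

definition tupl where "tupl B r1 r2 g1 g2 = (THE h. hom C h (dm g1) B \<and> r1 \<cdot> h = g1 \<and> r2 \<cdot> h = g2)"
definition cotupl where "cotupl B s1 s2 g1 g2 = (THE h. hom C h B (cd g1) \<and> h \<cdot> s1 = g1 \<and> h \<cdot> s2 = g2)"

lemma tupl: assumes B: "biproduct C X1 X2 B s1 r1 s2 r2" and "cd g1 = X1" "cd g2 = X2" "dm g2 = dm g1"
  shows "dm (tupl B r1 r2 g1 g2) = dm g1" "cd (tupl B r1 r2 g1 g2) = B"
    "r1 \<cdot> tupl B r1 r2 g1 g2 = g1" "r2 \<cdot> tupl B r1 r2 g1 g2 = g2"
proof -
  have "\<exists>!h. hom C h (dm g1) B \<and> r1 \<cdot> h = g1 \<and> r2 \<cdot> h = g2"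
    using B assms(2-4) unfolding biproduct_def hom_def by auto
  then have "hom C (tupl B r1 r2 g1 g2) (dm g1) B \<and> r1 \<cdot> tupl B r1 r2 g1 g2 = g1 \<and> r2 \<cdot> tupl B r1 r2 g1 g2 = g2"
    unfolding tupl_def by (rule theI')
  then show "dm (tupl B r1 r2 g1 g2) = dm g1" "cd (tupl B r1 r2 g1 g2) = B"
    "r1 \<cdot> tupl B r1 r2 g1 g2 = g1" "r2 \<cdot> tupl B r1 r2 g1 g2 = g2" unfolding hom_def by auto
qed

lemma tupl_u: assumes B: "biproduct C X1 X2 B s1 r1 s2 r2" and "cd h = B"
  shows "h = tupl B r1 r2 (r1 \<cdot> h) (r2 \<cdot> h)"
proof -
  have U: "\<forall>T g1 g2. hom C g1 T X1 \<and> hom C g2 T X2 \<longrightarrow>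
        (\<exists>!h. hom C h T B \<and> r1 \<cdot> h = g1 \<and> r2 \<cdot> h = g2)" using B unfolding biproduct_def by blast
  have "\<exists>!h'. hom C h' (dm (r1 \<cdot> h)) B \<and> r1 \<cdot> h' = r1 \<cdot> h \<and> r2 \<cdot> h' = r2 \<cdot> h"
    by (rule U[rule_format]) (use assms(2) bp[OF B] in \<open>auto simp: hom_def\<close>)
  moreover have "hom C h (dm (r1 \<cdot> h)) B" using assms bp[OF B] unfolding hom_def by auto
  ultimately show ?thesis unfolding tupl_def by (metis (mono_tags, lifting) the_equality)
qed

lemma bp_mono: assumes B: "biproduct C X1 X2 B s1 r1 s2 r2" and "cd h = B" "cd h' = B"
  "r1 \<cdot> h = r1 \<cdot> h'" "r2 \<cdot> h = r2 \<cdot> h'" shows "h = h'"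
  using tupl_u[OF B] assms by metis

lemma cotupl: assumes B: "biproduct C X1 X2 B s1 r1 s2 r2" and "dm g1 = X1" "dm g2 = X2" "cd g2 = cd g1"
  shows "dm (cotupl B s1 s2 g1 g2) = B" "cd (cotupl B s1 s2 g1 g2) = cd g1"
    "cotupl B s1 s2 g1 g2 \<cdot> s1 = g1" "cotupl B s1 s2 g1 g2 \<cdot> s2 = g2"
proof -
  have "\<exists>!h. hom C h B (cd g1) \<and> h \<cdot> s1 = g1 \<and> h \<cdot> s2 = g2"
    using B assms(2-4) unfolding biproduct_def hom_def by auto
  then have "hom C (cotupl B s1 s2 g1 g2) B (cd g1) \<and> cotupl B s1 s2 g1 g2 \<cdot> s1 = g1 \<and> cotupl B s1 s2 g1 g2 \<cdot> s2 = g2"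
    unfolding cotupl_def by (rule theI')
  then show "dm (cotupl B s1 s2 g1 g2) = B" "cd (cotupl B s1 s2 g1 g2) = cd g1"
    "cotupl B s1 s2 g1 g2 \<cdot> s1 = g1" "cotupl B s1 s2 g1 g2 \<cdot> s2 = g2" unfolding hom_def by auto
qed

lemma cotupl_u: assumes B: "biproduct C X1 X2 B s1 r1 s2 r2" and "dm h = B"
  shows "h = cotupl B s1 s2 (h \<cdot> s1) (h \<cdot> s2)"
proof -
  have U: "\<forall>T g1 g2. hom C g1 X1 T \<and> hom C g2 X2 T \<longrightarrow>
        (\<exists>!h. hom C h B T \<and> h \<cdot> s1 = g1 \<and> h \<cdot> s2 = g2)" using B unfolding biproduct_def by blast
  have "\<exists>!h'. hom C h' B (cd (h \<cdot> s1)) \<and> h' \<cdot> s1 = h \<cdot> s1 \<and> h' \<cdot> s2 = h \<cdot> s2"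
    by (rule U[rule_format]) (use assms(2) bp[OF B] in \<open>auto simp: hom_def\<close>)
  moreover have "hom C h B (cd (h \<cdot> s1))" using assms bp[OF B] unfolding hom_def by auto
  ultimately show ?thesis unfolding cotupl_def by (metis (mono_tags, lifting) the_equality)
qed

lemma bp_epi: assumes B: "biproduct C X1 X2 B s1 r1 s2 r2" and "dm h = B" "dm h' = B"
  "h \<cdot> s1 = h' \<cdot> s1" "h \<cdot> s2 = h' \<cdot> s2" shows "h = h'"
  using cotupl_u[OF B] assms by metis

lemma tupl_swap: "dm g2 = dm g1 \<Longrightarrow> tupl B r2 r1 g2 g1 = tupl B r1 r2 g1 g2"
  unfolding tupl_def by metis
lemma cotupl_swap: "cd g2 = cd g1 \<Longrightarrow> cotupl B s2 s1 g2 g1 = cotupl B s1 s2 g1 g2"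
  unfolding cotupl_def by metis


lemma ext_r: "a \<cdot> b = c \<Longrightarrow> dm a = cd b \<Longrightarrow> dm b = cd x \<Longrightarrow> a \<cdot> (b \<cdot> x) = c \<cdot> x"
  by (metis assoc)

lemma sum_indep:
  assumes B: "biproduct C Y Y B s1 r1 s2 r2" and B': "biproduct C X X B' s1' r1' s2' r2'"
  and f: "dm f = X" "cd f = Y" and g: "dm g = X" "cd g = Y"
  shows "cotupl B s1 s2 (idt Y) (idt Y) \<cdot> tupl B r1 r2 f g = cotupl B' s1' s2' f g \<cdot> tupl B' r1' r2' (idt X) (idt X)"
proof -
  note b = bp[OF B] and b' = bp[OF B']
  define q where "q = cotupl B s1 s2 (idt Y) (idt Y)"
  define p where "p = tupl B r1 r2 f g"
  define m' where "m' = cotupl B' s1' s2' f g"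
  define d' where "d' = tupl B' r1' r2' (idt X) (idt X)"
  define M where "M = tupl B r1 r2 (f \<cdot> r1') (g \<cdot> r2')"
  have q: "dm q = B" "cd q = Y" "q \<cdot> s1 = idt Y" "q \<cdot> s2 = idt Y" using cotupl[OF B, of "idt Y" "idt Y"] b unfolding q_def by auto
  have p: "dm p = X" "cd p = B" "r1 \<cdot> p = f" "r2 \<cdot> p = g" using tupl[OF B, of f g] f g unfolding p_def by auto
  have m': "dm m' = B'" "cd m' = Y" "m' \<cdot> s1' = f" "m' \<cdot> s2' = g" using cotupl[OF B', of f g] f g unfolding m'_def by auto
  have d': "dm d' = X" "cd d' = B'" "r1' \<cdot> d' = idt X" "r2' \<cdot> d' = idt X" using tupl[OF B', of "idt X" "idt X"] unfolding d'_def by auto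
  have M: "dm M = B'" "cd M = B" "r1 \<cdot> M = f \<cdot> r1'" "r2 \<cdot> M = g \<cdot> r2'" using tupl[OF B, of "f \<cdot> r1'" "g \<cdot> r2'"] f g b' unfolding M_def by auto
  have Ms1: "M \<cdot> s1' = s1 \<cdot> f"
    by (rule bp_mono[OF B]) (use b b' f g M in \<open>simp_all add: assoc ext_r[OF M(3)] ext_r[OF M(4)] ext_r[OF b(9)] ext_r[OF b(11)]\<close>)
  have Ms2: "M \<cdot> s2' = s2 \<cdot> g"
    by (rule bp_mono[OF B]) (use b b' f g M in \<open>simp_all add: assoc ext_r[OF M(3)] ext_r[OF M(4)] ext_r[OF b(10)] ext_r[OF b(12)]\<close>)
  have qM: "q \<cdot> M = m'"
    by (rule bp_epi[OF B']) (use b b' f g M q m' in \<open>simp_all add: assoc Ms1 Ms2 ext_r[OF q(3)] ext_r[OF q(4)]\<close>)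
  have Md: "M \<cdot> d' = p"
    by (rule bp_mono[OF B]) (use b b' f g M p d' in \<open>simp_all add: assoc ext_r[OF M(3)] ext_r[OF M(4)]\<close>)
  have "q \<cdot> p = m' \<cdot> d'" using qM Md M q d' by (metis assoc)
  then show ?thesis unfolding q_def p_def m'_def d'_def .
qed


section \<open>Chosen orthonormal biproducts and addition\<close>

definition obp where "obp X Y = (SOME (B,s1,s2). ortho_biproduct C X Y B s1 (st s1) s2 (st s2))"
definition ob where "ob X Y = fst (obp X Y)"
definition i1 where "i1 X Y = fst (snd (obp X Y))"
definition i2 where "i2 X Y = snd (snd (obp X Y))"

lemma obp: "ortho_biproduct C X Y (ob X Y) (i1 X Y) (st (i1 X Y)) (i2 X Y) (st (i2 X Y))"
proof -
  obtain B s1 r1 s2 r2 where "ortho_biproduct C X Y B s1 r1 s2 r2"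
    using ph unfolding pre_hilbert_def by blast
  then have "ortho_biproduct C X Y B s1 (st s1) s2 (st s2)" unfolding ortho_biproduct_def by auto
  then have "\<exists>p. (\<lambda>(B,s1,s2). ortho_biproduct C X Y B s1 (st s1) s2 (st s2)) p" by auto
  then have "(\<lambda>(B,s1,s2). ortho_biproduct C X Y B s1 (st s1) s2 (st s2)) (obp X Y)"
    unfolding obp_def by (rule someI_ex)
  then show ?thesis unfolding ob_def i1_def i2_def by (auto split: prod.splits)
qed

lemma obp_bp: "biproduct C X Y (ob X Y) (i1 X Y) (st (i1 X Y)) (i2 X Y) (st (i2 X Y))"
  using obp unfolding ortho_biproduct_def by auto

definition add where "add f g = cotupl (ob (cd f) (cd f)) (i1 (cd f) (cd f)) (i2 (cd f) (cd f)) (idt (cd f)) (idt (cd f))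
   \<cdot> tupl (ob (cd f) (cd f)) (st (i1 (cd f) (cd f))) (st (i2 (cd f) (cd f))) f g"

lemma add_delta: assumes B': "biproduct C X X B' s1' r1' s2' r2'"
  and f: "dm f = X" and g: "dm g = X" "cd g = cd f"
  shows "add f g = cotupl B' s1' s2' f g \<cdot> tupl B' r1' r2' (idt X) (idt X)"
  unfolding add_def by (rule sum_indep[OF obp_bp B']) (use f g in auto)

lemma add_nabla: assumes B: "biproduct C Y Y B s1 r1 s2 r2"
  and f: "cd f = Y" and g: "dm g = dm f" "cd g = Y"
  shows "add f g = cotupl B s1 s2 (idt Y) (idt Y) \<cdot> tupl B r1 r2 f g"
  using add_delta[OF obp_bp, of f "dm f" g] sum_indep[OF B obp_bp, of f "dm f" g] f g by auto

lemma add_dom[simp]: "dm g = dm f \<Longrightarrow> cd g = cd f \<Longrightarrow> dm (add f g) = dm f"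
  and add_cod[simp]: "dm g = dm f \<Longrightarrow> cd g = cd f \<Longrightarrow> cd (add f g) = cd f"
  unfolding add_def using tupl[OF obp_bp] cotupl[OF obp_bp] by auto

lemma is_sum_iff: "is_sum C f g h \<longleftrightarrow> dm g = dm f \<and> cd g = cd f \<and> h = add f g"
proof
  assume "is_sum C f g h"
  then obtain B s1 r1 s2 r2 p q where g: "dm g = dm f" "cd g = cd f" and B: "biproduct C (cd f) (cd f) B s1 r1 s2 r2"
    and p: "hom C p (dm f) B" "r1 \<cdot> p = f" "r2 \<cdot> p = g" and q: "hom C q B (cd f)" "q \<cdot> s1 = idt (cd f)" "q \<cdot> s2 = idt (cd f)"
    and h: "h = q \<cdot> p" unfolding is_sum_def by blast
  have "p = tupl B r1 r2 f g" using tupl_u[OF B, of p] p unfolding hom_def by auto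
  moreover have "q = cotupl B s1 s2 (idt (cd f)) (idt (cd f))" using cotupl_u[OF B, of q] q unfolding hom_def by auto
  ultimately show "dm g = dm f \<and> cd g = cd f \<and> h = add f g" using add_nabla[OF B] g h by auto
next
  assume a: "dm g = dm f \<and> cd g = cd f \<and> h = add f g"
  note B = obp_bp[of "cd f" "cd f"]
  show "is_sum C f g h" unfolding is_sum_def
    using a B tupl[OF B, of f g] cotupl[OF B, of "idt (cd f)" "idt (cd f)"] bp[OF B] add_nabla[OF B, of f g]
    unfolding hom_def
    apply (intro conjI)
      apply simp
     apply simp
    apply (rule exI[where x="ob (cd f) (cd f)"], rule exI[where x="i1 (cd f) (cd f)"], rule exI[where x="st (i1 (cd f) (cd f))"],
        rule exI[where x="i2 (cd f) (cd f)"], rule exI[where x="st (i2 (cd f) (cd f))"],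
        rule exI[where x="tupl (ob (cd f) (cd f)) (st (i1 (cd f) (cd f))) (st (i2 (cd f) (cd f))) f g"],
        rule exI[where x="cotupl (ob (cd f) (cd f)) (i1 (cd f) (cd f)) (i2 (cd f) (cd f)) (idt (cd f)) (idt (cd f))"])
    by auto
qed


lemma add_z_r[simp]: "add f (z (dm f) (cd f)) = f"
proof -
  let ?Y = "cd f"
  note B = obp_bp[of ?Y ?Y]
  note b = bp[OF B]
  have "tupl (ob ?Y ?Y) (st (i1 ?Y ?Y)) (st (i2 ?Y ?Y)) f (z (dm f) ?Y) = i1 ?Y ?Y \<cdot> f"
    using tupl_u[OF B, of "i1 ?Y ?Y \<cdot> f"] b by (simp add: ext_r[OF b(9)] ext_r[OF b(11)])
  then show ?thesis using add_nabla[OF B, of f "z (dm f) ?Y"] cotupl[OF B, of "idt ?Y" "idt ?Y"] b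
    by (simp add: ext_r[of "cotupl (ob ?Y ?Y) (i1 ?Y ?Y) (i2 ?Y ?Y) (idt ?Y) (idt ?Y)" "i1 ?Y ?Y" "idt ?Y"])
qed

lemma add_z_r'[simp]: "dm f = X \<Longrightarrow> cd f = Y \<Longrightarrow> add f (z X Y) = f" by auto

lemma add_comm: assumes "dm g = dm f" "cd g = cd f" shows "add g f = add f g"
proof -
  let ?Y = "cd f"
  note B = obp_bp[of ?Y ?Y]
  note B2 = bp_swap[OF B]
  show ?thesis using add_nabla[OF B, of f g] add_nabla[OF B2, of g f] assms
    tupl_swap[of g f] cotupl_swap[of "idt ?Y" "idt ?Y"] by simp
qed

lemma add_z_l[simp]: "add (z (dm f) (cd f)) f = f"
  using add_comm[of "z (dm f) (cd f)" f] by simp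

lemma add_z_l'[simp]: "dm f = X \<Longrightarrow> cd f = Y \<Longrightarrow> add (z X Y) f = f" by auto

lemma add_comp_r: assumes "dm g = dm f" "cd g = cd f" "cd k = dm f"
  shows "add f g \<cdot> k = add (f \<cdot> k) (g \<cdot> k)"
proof -
  let ?Y = "cd f"
  note B = obp_bp[of ?Y ?Y]
  note b = bp[OF B]
  let ?t = "tupl (ob ?Y ?Y) (st (i1 ?Y ?Y)) (st (i2 ?Y ?Y))"
  let ?q = "cotupl (ob ?Y ?Y) (i1 ?Y ?Y) (i2 ?Y ?Y) (idt ?Y) (idt ?Y)"
  have t: "dm (?t f g) = dm f" "cd (?t f g) = ob ?Y ?Y" "st (i1 ?Y ?Y) \<cdot> ?t f g = f" "st (i2 ?Y ?Y) \<cdot> ?t f g = g"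
    using tupl[OF B, of f g] assms by auto
  have "?t f g \<cdot> k = ?t (f \<cdot> k) (g \<cdot> k)"
    using tupl_u[OF B, of "?t f g \<cdot> k"] t assms b by (simp add: ext_r[OF t(3)] ext_r[OF t(4)])
  moreover have "dm ?q = ob ?Y ?Y" using cotupl[OF B, of "idt ?Y" "idt ?Y"] by simp
  ultimately show ?thesis using add_nabla[OF B, of f g] add_nabla[OF B, of "f \<cdot> k" "g \<cdot> k"] assms t
    by (simp add: assoc)
qed

lemma comp_add_l: assumes "dm g = dm f" "cd g = cd f" "dm h = cd f"
  shows "h \<cdot> add f g = add (h \<cdot> f) (h \<cdot> g)"
proof -
  let ?X = "dm f"
  note B = obp_bp[of ?X ?X]
  note b = bp[OF B]
  let ?t = "tupl (ob ?X ?X) (st (i1 ?X ?X)) (st (i2 ?X ?X)) (idt ?X) (idt ?X)"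
  let ?q = "cotupl (ob ?X ?X) (i1 ?X ?X) (i2 ?X ?X)"
  have q: "dm (?q f g) = ob ?X ?X" "cd (?q f g) = cd f" "?q f g \<cdot> i1 ?X ?X = f" "?q f g \<cdot> i2 ?X ?X = g"
    using cotupl[OF B, of f g] assms by auto
  have "h \<cdot> ?q f g = ?q (h \<cdot> f) (h \<cdot> g)"
    using cotupl_u[OF B, of "h \<cdot> ?q f g"] q assms b by (simp add: assoc)
  moreover have "cd ?t = ob ?X ?X" using tupl[OF B, of "idt ?X" "idt ?X"] by simp
  ultimately show ?thesis using add_delta[OF B, of f g] add_delta[OF B, of "h \<cdot> f" "h \<cdot> g"] assms q
    by (simp add: assoc[symmetric])
qed


lemma medial: assumes p: "dm b = dm a" "cd b = cd a" "dm c = dm a" "cd c = cd a" "dm d = dm a" "cd d = cd a"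
  shows "add (add a b) (add c d) = add (add a c) (add b d)"
proof -
  let ?X = "dm a" and ?Y = "cd a"
  note B = obp_bp[of ?Y ?Y] and D = obp_bp[of ?X ?X]
  note b = bp[OF B] and bd = bp[OF D]
  let ?t = "tupl (ob ?Y ?Y) (st (i1 ?Y ?Y)) (st (i2 ?Y ?Y))"
  let ?q = "cotupl (ob ?Y ?Y) (i1 ?Y ?Y) (i2 ?Y ?Y) (idt ?Y) (idt ?Y)"
  let ?ct = "cotupl (ob ?X ?X) (i1 ?X ?X) (i2 ?X ?X)"
  let ?d = "tupl (ob ?X ?X) (st (i1 ?X ?X)) (st (i2 ?X ?X)) (idt ?X) (idt ?X)"
  have ab: "dm (?ct a b) = ob ?X ?X" "cd (?ct a b) = ?Y" "?ct a b \<cdot> i1 ?X ?X = a" "?ct a b \<cdot> i2 ?X ?X = b"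
    using cotupl[OF D, of a b] p by auto
  have cd': "dm (?ct c d) = ob ?X ?X" "cd (?ct c d) = ?Y" "?ct c d \<cdot> i1 ?X ?X = c" "?ct c d \<cdot> i2 ?X ?X = d"
    using cotupl[OF D, of c d] p by auto
  define N where "N = ?t (?ct a b) (?ct c d)"
  have N: "dm N = ob ?X ?X" "cd N = ob ?Y ?Y" "st (i1 ?Y ?Y) \<cdot> N = ?ct a b" "st (i2 ?Y ?Y) \<cdot> N = ?ct c d"
    using tupl[OF B, of "?ct a b" "?ct c d"] ab cd' unfolding N_def by auto
  have q: "dm ?q = ob ?Y ?Y" "cd ?q = ?Y" using cotupl[OF B, of "idt ?Y" "idt ?Y"] by auto
  have dd: "dm ?d = ?X" "cd ?d = ob ?X ?X" using tupl[OF D, of "idt ?X" "idt ?X"] by auto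
  have N1: "N \<cdot> i1 ?X ?X = ?t a c"
  proof -
    have "st (i1 ?Y ?Y) \<cdot> (N \<cdot> i1 ?X ?X) = a" using ext_r[OF N(3)] N bd ab b by simp
    moreover have "st (i2 ?Y ?Y) \<cdot> (N \<cdot> i1 ?X ?X) = c" using ext_r[OF N(4)] N bd cd' b by simp
    moreover have "cd (N \<cdot> i1 ?X ?X) = ob ?Y ?Y" using N bd by simp
    ultimately show ?thesis using tupl_u[OF B, of "N \<cdot> i1 ?X ?X"] by simp
  qed
  have N2: "N \<cdot> i2 ?X ?X = ?t b d"
  proof -
    have "st (i1 ?Y ?Y) \<cdot> (N \<cdot> i2 ?X ?X) = b" using ext_r[OF N(3)] N bd ab b by simp
    moreover have "st (i2 ?Y ?Y) \<cdot> (N \<cdot> i2 ?X ?X) = d" using ext_r[OF N(4)] N bd cd' b by simp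
    moreover have "cd (N \<cdot> i2 ?X ?X) = ob ?Y ?Y" using N bd by simp
    ultimately show ?thesis using tupl_u[OF B, of "N \<cdot> i2 ?X ?X"] by simp
  qed
  have qN: "?q \<cdot> N = ?ct (add a c) (add b d)"
    using cotupl_u[OF D, of "?q \<cdot> N"] N q bd N1 N2 add_nabla[OF B, of a c] add_nabla[OF B, of b d] p
    by (simp add: assoc)
  have Nd: "N \<cdot> ?d = ?t (add a b) (add c d)"
    using tupl_u[OF B, of "N \<cdot> ?d"] N dd b add_delta[OF D, of a b] add_delta[OF D, of c d] p
    by (simp add: assoc[symmetric])
  have "add (add a b) (add c d) = ?q \<cdot> (N \<cdot> ?d)" using add_nabla[OF B, of "add a b" "add c d"] Nd p by simp
  also have "\<dots> = (?q \<cdot> N) \<cdot> ?d" using N q dd by (simp add: assoc)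
  also have "\<dots> = add (add a c) (add b d)" using qN add_delta[OF D, of "add a c" "add b d"] p by simp
  finally show ?thesis .
qed

lemma add_assoc: assumes p: "dm b = dm a" "cd b = cd a" "dm c = dm a" "cd c = cd a"
  shows "add (add a b) c = add a (add b c)"
proof -
  have "add (add a b) c = add (add a b) (add (z (dm a) (cd a)) c)" using p add_z_l[of c] by simp
  also have "\<dots> = add (add a (z (dm a) (cd a))) (add b c)" using medial[of b a "z (dm a) (cd a)" c] p by simp
  finally show ?thesis by simp
qed

lemma st_add: assumes "dm g = dm f" "cd g = cd f" shows "st (add f g) = add (st f) (st g)"
proof -
  let ?Y = "cd f"
  note B = obp_bp[of ?Y ?Y]
  note b = bp[OF B]
  let ?t = "tupl (ob ?Y ?Y) (st (i1 ?Y ?Y)) (st (i2 ?Y ?Y))"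
  let ?q = "cotupl (ob ?Y ?Y) (i1 ?Y ?Y) (i2 ?Y ?Y)"
  have t: "dm (?t f g) = dm f" "cd (?t f g) = ob ?Y ?Y" "st (i1 ?Y ?Y) \<cdot> ?t f g = f" "st (i2 ?Y ?Y) \<cdot> ?t f g = g"
    using tupl[OF B, of f g] assms by auto
  have q: "dm (?q (idt ?Y) (idt ?Y)) = ob ?Y ?Y" "cd (?q (idt ?Y) (idt ?Y)) = ?Y"
     "?q (idt ?Y) (idt ?Y) \<cdot> i1 ?Y ?Y = idt ?Y" "?q (idt ?Y) (idt ?Y) \<cdot> i2 ?Y ?Y = idt ?Y"
    using cotupl[OF B, of "idt ?Y" "idt ?Y"] by auto
  have "st (?t f g) \<cdot> i1 ?Y ?Y = st f" using st_comp[of "st (i1 ?Y ?Y)" "?t f g"] t b by simp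
  moreover have "st (?t f g) \<cdot> i2 ?Y ?Y = st g" using st_comp[of "st (i2 ?Y ?Y)" "?t f g"] t b by simp
  ultimately have 1: "st (?t f g) = ?q (st f) (st g)" using cotupl_u[OF B, of "st (?t f g)"] t by simp
  have "st (i1 ?Y ?Y) \<cdot> st (?q (idt ?Y) (idt ?Y)) = idt ?Y" using st_comp[of "?q (idt ?Y) (idt ?Y)" "i1 ?Y ?Y"] q b
    by simp
  moreover have "st (i2 ?Y ?Y) \<cdot> st (?q (idt ?Y) (idt ?Y)) = idt ?Y" using st_comp[of "?q (idt ?Y) (idt ?Y)" "i2 ?Y ?Y"] q b
    by simp
  ultimately have 2: "st (?q (idt ?Y) (idt ?Y)) = ?t (idt ?Y) (idt ?Y)" using tupl_u[OF B, of "st (?q (idt ?Y) (idt ?Y))"] q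
    by simp
  show ?thesis using add_nabla[OF B, of f g] add_delta[OF B, of "st f" "st g"] assms st_comp[of "?q (idt ?Y) (idt ?Y)" "?t f g"] t q 1 2
    by simp
qed


section \<open>Negation\<close>

lemma kernelD: assumes "kernel C f k"
  shows "cd k = dm f" "f \<cdot> k = z (dm k) (cd f)"
    "cd h = dm f \<Longrightarrow> f \<cdot> h = z (dm h) (cd f) \<Longrightarrow> \<exists>u. dm u = dm h \<and> cd u = dm k \<and> k \<cdot> u = h"
proof -
  show "cd k = dm f" using assms unfolding kernel_def by auto
  then show "f \<cdot> k = z (dm k) (cd f)" using assms unfolding kernel_def is_zero_iff by auto
  show "cd h = dm f \<Longrightarrow> f \<cdot> h = z (dm h) (cd f) \<Longrightarrow> \<exists>u. dm u = dm h \<and> cd u = dm k \<and> k \<cdot> u = h"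
  proof -
    assume a: "cd h = dm f" "f \<cdot> h = z (dm h) (cd f)"
    then have "is_zero C (f \<cdot> h)" unfolding is_zero_iff by simp
    then show ?thesis using assms a unfolding kernel_def hom_def by metis
  qed
qed

lemma zero_comp_eq: "dm g = cd f \<Longrightarrow> g \<cdot> f = z X Y \<Longrightarrow> g \<cdot> f = z (dm f) (cd g)"
  by (metis comp_cod comp_dom z_cod z_dom)

lemma neg_ex: "\<exists>n. dm n = X \<and> cd n = X \<and> add (idt X) n = z X X"
proof -
  let ?B = "ob X X" and ?s1 = "i1 X X" and ?s2 = "i2 X X"
  note Bo = obp[of X X] and B = obp_bp[of X X]
  note b = bp[OF B]
  define D where "D = tupl ?B (st ?s1) (st ?s2) (idt X) (idt X)"
  have D: "dm D = X" "cd D = ?B" "st ?s1 \<cdot> D = idt X" "st ?s2 \<cdot> D = idt X"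
    using tupl[OF B, of "idt X" "idt X"] unfolding D_def by auto
  obtain g where g: "dm g = ?B" "kernel C g D"
    using ph Bo D unfolding pre_hilbert_def hom_def by blast
  obtain k where k: "kernel C (st D) k" "isometry C k" using ph unfolding pre_hilbert_def by blast
  note gk = kernelD[OF g(2)] and kk = kernelD[OF k(1)]
  let ?K = "dm k"
  have kc: "cd k = ?B" using kk D by simp
  have kiso: "st k \<cdot> k = idt ?K" using k(2) unfolding isometry_def .
  have kz: "st D \<cdot> k = z ?K X" using kk D by simp
  define p where "p = st ?s1 \<cdot> k"
  define q where "q = st ?s2 \<cdot> k"
  have pq: "dm p = ?K" "cd p = X" "dm q = ?K" "cd q = X" unfolding p_def q_def using kc b by auto
  have "k = tupl ?B (st ?s1) (st ?s2) p q" using tupl_u[OF B, of k] kc unfolding p_def q_def by simp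
  moreover have "st D = cotupl ?B ?s1 ?s2 (idt X) (idt X)"
  proof -
    have "st D \<cdot> ?s1 = idt X" using st_comp[of "st ?s1" D] D b by simp
    moreover have "st D \<cdot> ?s2 = idt X" using st_comp[of "st ?s2" D] D b by simp
    ultimately show ?thesis using cotupl_u[OF B, of "st D"] D by simp
  qed
  ultimately have addpq: "add p q = z ?K X" using add_nabla[OF B, of p q] pq kz by simp
  have sp: "st k \<cdot> ?s1 = st p" using st_comp[of "st ?s1" k] kc b unfolding p_def by simp
  have sq: "st k \<cdot> ?s2 = st q" using st_comp[of "st ?s2" k] kc b unfolding q_def by simp
  have "st D \<cdot> st g = z (dm (st g)) X"
    using st_comp[of g D] gk g D by simp
  then obtain t where t: "dm t = dm (st g)" "cd t = ?K" "k \<cdot> t = st g"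
    using kk(3)[of "st g"] g D by auto
  have gt: "g = st t \<cdot> st k" using st_comp[of k t] t kc by simp
  define h where "h = add (k \<cdot> st p) ?s2"
  have h: "dm h = X" "cd h = ?B" unfolding h_def using kc pq b by auto
  have "st k \<cdot> h = add (st k \<cdot> (k \<cdot> st p)) (st k \<cdot> ?s2)"
    unfolding h_def using comp_add_l[of ?s2 "k \<cdot> st p" "st k"] kc pq b by simp
  also have "\<dots> = add (st p) (st q)" using sq kiso pq kc by (simp add: assoc[symmetric])
  also have "\<dots> = z X ?K" using st_add[of q p] addpq pq by simp
  finally have "st k \<cdot> h = z X ?K" .
  then have "g \<cdot> h = z X (cd g)"
    using gt t h kc by (simp add: assoc)
  then obtain u where u: "dm u = X" "cd u = X" "D \<cdot> u = h"
    using gk(3)[of h] h g D by auto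
  have "st ?s1 \<cdot> (D \<cdot> u) = u" using u(1,2) D b by (simp add: assoc[symmetric])
  moreover have "st ?s2 \<cdot> (D \<cdot> u) = u" using u(1,2) D b by (simp add: assoc[symmetric])
  moreover have "st ?s1 \<cdot> h = p \<cdot> st p"
    unfolding h_def using comp_add_l[of ?s2 "k \<cdot> st p" "st ?s1"] kc pq b by (simp add: assoc[symmetric] p_def[symmetric])
  moreover have "st ?s2 \<cdot> h = add (q \<cdot> st p) (idt X)"
    unfolding h_def using comp_add_l[of ?s2 "k \<cdot> st p" "st ?s2"] kc pq b by (simp add: assoc[symmetric] q_def[symmetric])
  ultimately have e1: "p \<cdot> st p = add (q \<cdot> st p) (idt X)" using u(3) by simp
  have e2: "add (p \<cdot> st p) (q \<cdot> st p) = z X X" using add_comp_r[of q p "st p"] addpq pq by simp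
  define n where "n = add (q \<cdot> st p) (q \<cdot> st p)"
  have "add (idt X) n = add (add (idt X) (q \<cdot> st p)) (q \<cdot> st p)"
    unfolding n_def using add_assoc[of "q \<cdot> st p" "idt X" "q \<cdot> st p"] pq by simp
  also have "\<dots> = z X X" using e1 e2 add_comm[of "q \<cdot> st p" "idt X"] pq by simp
  finally show ?thesis using pq n_def by (intro exI[of _ n]) simp
qed


definition negI where "negI X = (SOME n. dm n = X \<and> cd n = X \<and> add (idt X) n = z X X)"
definition neg where "neg f = negI (cd f) \<cdot> f"

lemma negI: "dm (negI X) = X" "cd (negI X) = X" "add (idt X) (negI X) = z X X"
  using someI_ex[OF neg_ex[of X]] unfolding negI_def by auto

lemma neg_dom[simp]: "dm (neg f) = dm f" and neg_cod[simp]: "cd (neg f) = cd f"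
  unfolding neg_def using negI by auto

lemma add_neg[simp]: "add f (neg f) = z (dm f) (cd f)"
proof -
  have "add f (neg f) = add (idt (cd f) \<cdot> f) (negI (cd f) \<cdot> f)" unfolding neg_def by simp
  also have "\<dots> = add (idt (cd f)) (negI (cd f)) \<cdot> f" using add_comp_r[of "negI (cd f)" "idt (cd f)" f] negI by simp
  also have "\<dots> = z (dm f) (cd f)" using negI by simp
  finally show ?thesis .
qed

lemma add_neg_l[simp]: "add (neg f) f = z (dm f) (cd f)"
  using add_comm[of "neg f" f] by simp

lemma add_cancel: assumes p: "dm b = dm a" "cd b = cd a" "dm c = dm a" "cd c = cd a" and e: "add a b = add a c"
  shows "b = c"
proof -
  have "b = add (add (neg a) a) b" using p by simp
  also have "\<dots> = add (neg a) (add a b)" using add_assoc[of a "neg a" b] p by simp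
  also have "\<dots> = add (neg a) (add a c)" using e by simp
  also have "\<dots> = add (add (neg a) a) c" using add_assoc[of a "neg a" c] p by simp
  also have "\<dots> = c" using p by simp
  finally show ?thesis .
qed

lemma neg_unique: assumes p: "dm b = dm a" "cd b = cd a" and e: "add a b = z (dm a) (cd a)"
  shows "b = neg a"
  using add_cancel[of b a "neg a"] p e by simp

lemma neg_comp_r: assumes "cd k = dm f" shows "neg f \<cdot> k = neg (f \<cdot> k)"
proof -
  have "add (f \<cdot> k) (neg f \<cdot> k) = add f (neg f) \<cdot> k" using add_comp_r[of "neg f" f k] assms by simp
  also have "\<dots> = z (dm k) (cd f)" using assms by simp
  finally show ?thesis using neg_unique[of "neg f \<cdot> k" "f \<cdot> k"] assms by simp
qed

lemma comp_neg_l: assumes "dm h = cd f" shows "h \<cdot> neg f = neg (h \<cdot> f)"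
proof -
  have "add (h \<cdot> f) (h \<cdot> neg f) = h \<cdot> add f (neg f)" using comp_add_l[of "neg f" f h] assms by simp
  also have "\<dots> = z (dm f) (cd h)" using assms by simp
  finally show ?thesis using neg_unique[of "h \<cdot> neg f" "h \<cdot> f"] assms by simp
qed

lemma st_neg: "st (neg f) = neg (st f)"
proof -
  have "add (st f) (st (neg f)) = st (add f (neg f))" using st_add[of "neg f" f] by simp
  also have "\<dots> = z (cd f) (dm f)" by simp
  finally show ?thesis using neg_unique[of "st (neg f)" "st f"] by simp
qed

lemma neg_z[simp]: "neg (z X Y) = z X Y"
  using neg_unique[of "z X Y" "z X Y"] by simp

lemma ct_t: assumes B: "biproduct C X1 X2 B s1 r1 s2 r2"
  and a: "dm a = X1" and b: "dm b = X2" "cd b = cd a" and c: "cd c = X1" and d: "cd d = X2" "dm d = dm c"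
  shows "cotupl B s1 s2 a b \<cdot> tupl B r1 r2 c d = add (a \<cdot> c) (b \<cdot> d)"
proof -
  note bb = bp[OF B]
  have "r1 \<cdot> add (s1 \<cdot> c) (s2 \<cdot> d) = c"
    using comp_add_l[of "s2 \<cdot> d" "s1 \<cdot> c" r1] bb c d by (simp add: assoc[symmetric])
  moreover have "r2 \<cdot> add (s1 \<cdot> c) (s2 \<cdot> d) = d"
    using comp_add_l[of "s2 \<cdot> d" "s1 \<cdot> c" r2] bb c d by (simp add: assoc[symmetric])
  ultimately have "tupl B r1 r2 c d = add (s1 \<cdot> c) (s2 \<cdot> d)"
    using tupl_u[OF B, of "add (s1 \<cdot> c) (s2 \<cdot> d)"] bb c d by simp
  moreover note ct = cotupl[OF B, of a b]
  ultimately show ?thesis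
    using comp_add_l[of "s2 \<cdot> d" "s1 \<cdot> c" "cotupl B s1 s2 a b"] bb a b c d by (simp add: assoc[symmetric])
qed


lemma iv_iii: assumes "block_matrix_positive C f" shows "\<exists>T t1 t2. codilation C f T t1 t2"
proof -
  let ?X = "dm f" and ?Y = "cd f"
  let ?B = "ob ?X ?Y" and ?s1 = "i1 ?X ?Y" and ?s2 = "i2 ?X ?Y"
  note Bo = obp[of ?X ?Y] and B = obp_bp[of ?X ?Y]
  note b = bp[OF B]
  define a1 where "a1 = tupl ?B (st ?s1) (st ?s2) (idt ?X) f"
  define a2 where "a2 = tupl ?B (st ?s1) (st ?s2) (st f) (idt ?Y)"
  have a1: "dm a1 = ?X" "cd a1 = ?B" "st ?s1 \<cdot> a1 = idt ?X" "st ?s2 \<cdot> a1 = f"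
    using tupl[OF B, of "idt ?X" f] unfolding a1_def by auto
  have a2: "dm a2 = ?Y" "cd a2 = ?B" "st ?s1 \<cdot> a2 = st f" "st ?s2 \<cdot> a2 = idt ?Y"
    using tupl[OF B, of "st f" "idt ?Y"] unfolding a2_def by auto
  define m where "m = cotupl ?B ?s1 ?s2 a1 a2"
  have m: "dm m = ?B" "cd m = ?B" "m \<cdot> ?s1 = a1" "m \<cdot> ?s2 = a2"
    using cotupl[OF B, of a1 a2] a1 a2 unfolding m_def by auto
  have "positive C m"
    using assms Bo m a1 a2 unfolding block_matrix_positive_def hom_def by auto
  then obtain y where y: "dm y = ?B" "m = st y \<cdot> y" unfolding positive_def using m by auto
  define t1 where "t1 = y \<cdot> ?s1"
  define t2 where "t2 = y \<cdot> ?s2"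
  have e: "st ta \<cdot> tb = st sa \<cdot> (m \<cdot> sb)" if "ta = y \<cdot> sa" "tb = y \<cdot> sb" "cd sa = ?B" "cd sb = ?B" for ta tb sa sb
    using that y st_comp[of y sa] by (simp add: assoc)
  have "codilation C f (cd y) t1 t2"
    unfolding codilation_def hom_def isometry_def
    using e[OF t1_def t1_def] e[OF t2_def t1_def] e[OF t2_def t2_def] m a1 a2 b y
      ext_r[OF m(3)] ext_r[OF m(4)]
    unfolding t1_def t2_def by simp
  then show ?thesis by blast
qed


lemma i_iv: assumes "contractive C f" shows "block_matrix_positive C f"
  unfolding block_matrix_positive_def
proof (intro allI impI)
  fix B s1 r1 s2 r2 m
  assume H: "ortho_biproduct C (dm f) (cd f) B s1 r1 s2 r2 \<and> hom C m B B \<and>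
        r1 \<cdot> (m \<cdot> s1) = idt (dm f) \<and> r1 \<cdot> (m \<cdot> s2) = st f \<and>
        r2 \<cdot> (m \<cdot> s1) = f \<and> r2 \<cdot> (m \<cdot> s2) = idt (cd f)"
  let ?X = "dm f" and ?Y = "cd f"
  have Bb: "biproduct C ?X ?Y B s1 r1 s2 r2" and r: "r1 = st s1" "r2 = st s2"
    using H unfolding ortho_biproduct_def by auto
  note b = bp[OF Bb]
  have m: "dm m = B" "cd m = B" using H unfolding hom_def by auto
  obtain c where c: "dm c = ?X" "cd c = ?X" "positive C c" "idt ?X = add (st f \<cdot> f) c"
    using assms unfolding contractive_def leq_def is_sum_iff hom_def by auto
  obtain y where y: "dm y = ?X" "c = st y \<cdot> y" using c unfolding positive_def by auto
  let ?Z = "cd y"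
  let ?E = "ob ?Y ?Z" and ?e1 = "i1 ?Y ?Z" and ?e2 = "i2 ?Y ?Z"
  note E = obp_bp[of ?Y ?Z]
  note be = bp[OF E]
  define a where "a = tupl ?E (st ?e1) (st ?e2) f y"
  have a: "dm a = ?X" "cd a = ?E" "st ?e1 \<cdot> a = f" "st ?e2 \<cdot> a = y"
    using tupl[OF E, of f y] y unfolding a_def by auto
  have sta: "st a = cotupl ?E ?e1 ?e2 (st f) (st y)"
  proof -
    have "st a \<cdot> ?e1 = st f" using st_comp[of "st ?e1" a] a be by simp
    moreover have "st a \<cdot> ?e2 = st y" using st_comp[of "st ?e2" a] a be by simp
    ultimately show ?thesis using cotupl_u[OF E, of "st a"] a by simp
  qed
  have aa: "st a \<cdot> a = idt ?X"
    using ct_t[OF E, of "st f" "st y" f y] sta c y unfolding a_def by simp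
  define w where "w = cotupl B s1 s2 a ?e1"
  have w: "dm w = B" "cd w = ?E" "w \<cdot> s1 = a" "w \<cdot> s2 = ?e1"
    using cotupl[OF Bb, of a ?e1] a be unfolding w_def by auto
  have ent: "r \<cdot> (st w \<cdot> (w \<cdot> s)) = st (w \<cdot> sa) \<cdot> (w \<cdot> s)" if "r = st sa" "cd sa = B" "cd s = B" for r sa s
    using that st_comp[of w sa] w by (simp add: assoc)
  have st1: "st (w \<cdot> s1) = st a" and st2: "st (w \<cdot> s2) = st ?e1" using w by simp_all
  have be1: "st a \<cdot> ?e1 = st f" using st_comp[of "st ?e1" a] a be by simp
  have e11: "r1 \<cdot> (st w \<cdot> (w \<cdot> s1)) = r1 \<cdot> (m \<cdot> s1)" using ent[OF r(1), of s1] w b aa H by simp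
  have e12: "r1 \<cdot> (st w \<cdot> (w \<cdot> s2)) = r1 \<cdot> (m \<cdot> s2)" using ent[OF r(1), of s2] w b be1 H by simp
  have e21: "r2 \<cdot> (st w \<cdot> (w \<cdot> s1)) = r2 \<cdot> (m \<cdot> s1)" using ent[OF r(2), of s1] w b a H by simp
  have e22: "r2 \<cdot> (st w \<cdot> (w \<cdot> s2)) = r2 \<cdot> (m \<cdot> s2)" using ent[OF r(2), of s2] w b be H by simp
  have "st w \<cdot> w = m"
  proof (rule bp_epi[OF Bb])
    show "(st w \<cdot> w) \<cdot> s1 = m \<cdot> s1"
      using bp_mono[OF Bb, of "st w \<cdot> (w \<cdot> s1)" "m \<cdot> s1"] e11 e21 w m b a by (simp add: assoc)
    show "(st w \<cdot> w) \<cdot> s2 = m \<cdot> s2"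
      using bp_mono[OF Bb, of "st w \<cdot> (w \<cdot> s2)" "m \<cdot> s2"] e12 e22 w m b be by (simp add: assoc)
  qed (use w m in auto)
  then show "positive C m" unfolding positive_def using w m by auto
qed


lemma iii_i: assumes "codilation C f T t1 t2" shows "contractive C f"
proof -
  let ?X = "dm f" and ?Y = "cd f"
  have t: "dm t1 = ?X" "cd t1 = T" "dm t2 = ?Y" "cd t2 = T" "st t1 \<cdot> t1 = idt ?X" "st t2 \<cdot> t2 = idt ?Y"
    "st t2 \<cdot> t1 = f" using assms unfolding codilation_def hom_def isometry_def by auto
  define e where "e = t2 \<cdot> st t2"
  have e: "dm e = T" "cd e = T" unfolding e_def using t by auto
  have ste: "st e = e" unfolding e_def using t st_comp[of t2 "st t2"] by simp
  have ee: "e \<cdot> e = e" unfolding e_def using t ext_r[OF t(6)] by (simp add: assoc)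
  define P where "P = add (idt T) (neg e)"
  have P: "dm P = T" "cd P = T" unfolding P_def using e by auto
  have stP: "st P = P" unfolding P_def using st_add[of "neg e" "idt T"] e ste st_neg[of e] by simp
  have eP: "e \<cdot> P = z T T"
    unfolding P_def using comp_add_l[of "neg e" "idt T" e] e comp_neg_l[of e e] ee by simp
  have PP: "P \<cdot> P = P"
  proof -
    have "P \<cdot> P = add (idt T \<cdot> P) (neg e \<cdot> P)" unfolding P_def[of] using add_comp_r[of "neg e" "idt T" P] e P
      by (simp add: P_def[symmetric])
    also have "\<dots> = P" using neg_comp_r[of P e] eP P e by simp
    finally show ?thesis .
  qed
  define y where "y = P \<cdot> t1"
  have y: "dm y = ?X" "cd y = T" unfolding y_def using P t by auto
  have "st y \<cdot> y = st t1 \<cdot> (P \<cdot> t1)"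
    unfolding y_def using st_comp[of P t1] P t stP ext_r[OF PP] by (simp add: assoc)
  also have "\<dots> = add (st t1 \<cdot> t1) (neg (st t1 \<cdot> (e \<cdot> t1)))"
    unfolding P_def using add_comp_r[of "neg e" "idt T" t1] comp_add_l[of "neg e \<cdot> t1" t1 "st t1"] e t
      neg_comp_r[of t1 e] comp_neg_l[of "st t1" "e \<cdot> t1"] by simp
  also have "\<dots> = add (idt ?X) (neg (st f \<cdot> f))"
  proof -
    have "st t1 \<cdot> (e \<cdot> t1) = st f \<cdot> f"
      unfolding e_def using t st_comp[of "st t2" t1] by (simp add: assoc)
    then show ?thesis using t by simp
  qed
  finally have c: "st y \<cdot> y = add (idt ?X) (neg (st f \<cdot> f))" .
  have "add (st f \<cdot> f) (st y \<cdot> y) = idt ?X"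
  proof -
    have "add (st f \<cdot> f) (st y \<cdot> y) = add (st f \<cdot> f) (add (neg (st f \<cdot> f)) (idt ?X))"
      using c add_comm[of "neg (st f \<cdot> f)" "idt ?X"] by simp
    also have "\<dots> = add (add (st f \<cdot> f) (neg (st f \<cdot> f))) (idt ?X)"
      using add_assoc[of "neg (st f \<cdot> f)" "st f \<cdot> f" "idt ?X"] by simp
    also have "\<dots> = idt ?X" by simp
    finally show ?thesis .
  qed
  moreover have pos: "positive C (st y \<cdot> y)" unfolding positive_def using y by (intro exI[of _ y]) simp
  ultimately show ?thesis unfolding contractive_def leq_def is_sum_iff hom_def
    using y by (intro conjI exI[of _ "st y \<cdot> y"]) auto
qed


lemma iii_ii: assumes "codilation C f T t1 t2"
  shows "\<exists>T t1 t2. codilation C f T t1 t2 \<and> jointly_epic C T t1 t2"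
proof -
  let ?X = "dm f" and ?Y = "cd f"
  have t: "dm t1 = ?X" "cd t1 = T" "dm t2 = ?Y" "cd t2 = T" "st t1 \<cdot> t1 = idt ?X" "st t2 \<cdot> t2 = idt ?Y"
    "st t2 \<cdot> t1 = f" using assms unfolding codilation_def hom_def isometry_def by auto
  let ?B = "ob ?X ?Y" and ?s1 = "i1 ?X ?Y" and ?s2 = "i2 ?X ?Y"
  note B = obp_bp[of ?X ?Y]
  note b = bp[OF B]
  define w where "w = cotupl ?B ?s1 ?s2 t1 t2"
  have w: "dm w = ?B" "cd w = T" "w \<cdot> ?s1 = t1" "w \<cdot> ?s2 = t2"
    using cotupl[OF B, of t1 t2] t unfolding w_def by auto
  obtain n where n: "kernel C (st w) n" "isometry C n" using ph unfolding pre_hilbert_def by blast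
  obtain i where i: "kernel C (st n) i" "isometry C i" using ph unfolding pre_hilbert_def by blast
  note nk = kernelD[OF n(1)] and ik = kernelD[OF i(1)]
  have nc: "cd n = T" using nk w by simp
  have ic: "cd i = T" using ik nc by simp
  have niso: "st n \<cdot> n = idt (dm n)" and iiso: "st i \<cdot> i = idt (dm i)" using n i unfolding isometry_def by auto
  have "st n \<cdot> w = z ?B (dm n)" using st_comp[of "st w" n] nk(2) nc w by simp
  then obtain e where e: "dm e = ?B" "cd e = dm i" "i \<cdot> e = w" using ik(3)[of w] w nc by auto
  have stw: "st w = st e \<cdot> st i" using st_comp[of i e] e(2,3) by simp
  have ee: "st e \<cdot> e = st w \<cdot> w"
  proof -
    have "st w \<cdot> w = (st e \<cdot> st i) \<cdot> (i \<cdot> e)" using stw e(3) by simp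
    also have "\<dots> = st e \<cdot> ((st i \<cdot> i) \<cdot> e)" using e(1,2) ic by (simp add: assoc)
    finally have "st w \<cdot> w = st e \<cdot> ((st i \<cdot> i) \<cdot> e)" .
    then show ?thesis using iiso e(1,2) by simp
  qed
  have gen: "st (e \<cdot> sa) \<cdot> (e \<cdot> sb) = st (w \<cdot> sa) \<cdot> (w \<cdot> sb)" if "cd sa = ?B" "cd sb = ?B" for sa sb
  proof -
    have "st (e \<cdot> sa) \<cdot> (e \<cdot> sb) = st sa \<cdot> ((st e \<cdot> e) \<cdot> sb)"
      using that st_comp[of e sa] e(1,2) by (simp add: assoc)
    also have "\<dots> = st sa \<cdot> ((st w \<cdot> w) \<cdot> sb)" using ee by simp
    also have "\<dots> = st (w \<cdot> sa) \<cdot> (w \<cdot> sb)" using that st_comp[of w sa] w by (simp add: assoc)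
    finally show ?thesis .
  qed
  define u1 where "u1 = e \<cdot> ?s1"
  define u2 where "u2 = e \<cdot> ?s2"
  have cod: "codilation C f (dm i) u1 u2"
    unfolding codilation_def hom_def isometry_def u1_def u2_def
    using gen[of ?s1 ?s1] gen[of ?s2 ?s2] gen[of ?s2 ?s1] w t e b by simp
  have je: "jointly_epic C (dm i) u1 u2"
    unfolding jointly_epic_def
  proof (intro allI impI)
    fix p q assume H: "dm p = dm i \<and> dm q = dm i \<and> cd p = cd q \<and> p \<cdot> u1 = q \<cdot> u1 \<and> p \<cdot> u2 = q \<cdot> u2"
    let ?W = "cd p"
    have pe: "p \<cdot> e = q \<cdot> e"
      by (rule bp_epi[OF B]) (use H e b in \<open>simp_all add: assoc u1_def[symmetric] u2_def[symmetric]\<close>)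
    define x where "x = add p (neg q)"
    have x: "dm x = dm i" "cd x = ?W" unfolding x_def using H by auto
    have xe: "x \<cdot> e = z ?B ?W"
      unfolding x_def using add_comp_r[of "neg q" p e] H e neg_comp_r[of e q] pe by simp
    have "st w \<cdot> (i \<cdot> st x) = z ?W ?B"
    proof -
      have "st w \<cdot> (i \<cdot> st x) = st e \<cdot> ((st i \<cdot> i) \<cdot> st x)" using stw e ic x by (simp add: assoc)
      also have "\<dots> = st (x \<cdot> e)" using iiso x e st_comp[of x e] by simp
      finally show ?thesis using xe by simp
    qed
    then obtain h where h: "dm h = ?W" "cd h = dm n" "n \<cdot> h = i \<cdot> st x"
      using nk(3)[of "i \<cdot> st x"] ic x w by auto
    have "h = (st n \<cdot> n) \<cdot> h" using niso h by simp
    also have "\<dots> = (st n \<cdot> i) \<cdot> st x" using h nc ic x by (simp add: assoc)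
    also have "\<dots> = z ?W (dm n)" using ik(2) nc ic x by simp
    finally have "h = z ?W (dm n)" .
    then have "i \<cdot> st x = z ?W T" using h nc by simp
    then have "st i \<cdot> (i \<cdot> st x) = z ?W (dm i)" using ic by simp
    moreover have "st i \<cdot> (i \<cdot> st x) = (st i \<cdot> i) \<cdot> st x" using x ic by (simp add: assoc)
    ultimately have "st x = z ?W (dm i)" using iiso x by simp
    then have "st (st x) = z (dm i) ?W" by simp
    then have "x = z (dm i) ?W" by simp
    have Hd: "dm p = dm i" "dm q = dm i" "cd q = ?W" using H by auto
    have "add x q = q" using Hd \<open>x = z (dm i) ?W\<close> by simp
    moreover have "add x q = add p (add (neg q) q)" unfolding x_def using add_assoc[of "neg q" p q] Hd by simp
    moreover have "add p (add (neg q) q) = p" using Hd by simp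
    ultimately show "p = q" by simp
  qed
  show ?thesis using cod je by blast
qed

end

theorem proposition7p14:
  fixes C :: "('o, 'm) scat" and f :: 'm
  assumes "pre_hilbert C"
  shows "(contractive C f \<longleftrightarrow> (\<exists>T t1 t2. codilation C f T t1 t2 \<and> jointly_epic C T t1 t2))
       \<and> (contractive C f \<longleftrightarrow> (\<exists>T t1 t2. codilation C f T t1 t2))
       \<and> (contractive C f \<longleftrightarrow> block_matrix_positive C f)"
proof -
  interpret ph C by unfold_locales (rule assms)
  have a: "contractive C f \<Longrightarrow> block_matrix_positive C f" by (rule i_iv)
  have b: "block_matrix_positive C f \<Longrightarrow> \<exists>T t1 t2. codilation C f T t1 t2" by (rule iv_iii)
  have c: "\<exists>T t1 t2. codilation C f T t1 t2 \<Longrightarrow> contractive C f" using iii_i by blast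
  have d: "\<exists>T t1 t2. codilation C f T t1 t2 \<Longrightarrow> \<exists>T t1 t2. codilation C f T t1 t2 \<and> jointly_epic C T t1 t2"
    using iii_ii by blast
  show ?thesis using a b c d by blast
qed

end
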